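(* Let $M=(\mathbf{D},\mathbf{I},\Sigma,\sim)$ be a $k$-sight model, $\sigma\in\Sigma$, and $\{z,z'\}=\{x,y\}$. If $M,\sigma\models K_zz'$, then $M,\sigma\models [z]K_zz'$.
   Context: Vocabulary: $Pred$ set of predicate symbols with arities containing a binary symbol $R$; $Cons$ nonempty finite set of constants; $Var=\{x,y\}$. A model is $M=(\mathbf{D},\mathbf{I},\Sigma,\sim)$: $\mathbf{D}$ nonempty finite; $\mathbf{I}(P)\subseteq\mathbf{D}^m$ for $m$-ary $P$, with $\mathbf{R}:=\mathbf{I}(R)$ serial; $\mathbf{I}(c)\in\mathbf{D}$ for $c\in Cons$, every element of $\mathbf{D}$ being some $\mathbf{I}(c)$; $\Sigma\subseteq\mathbf{D}^{Var}$ a nonempty set of assignments (situations); $\sim_x,\sim_y$ equivalence relations on $\Sigma$. Fix a natural number $k$. For $s\in\mathbf{D}$: $\mathbb{D}^0(s)=\{s\}$, $\mathbb{D}^{m+1}(s)=\mathbb{D}^m(s)\cup\{t:\exists u\in\mathbb{D}^m(s),(u,t)\in\mathbf{R}\text{ or }(t,u)\in\mathbf{R}\}$. $M$ is a $k$-sight model if whenever $\sigma\sim_w\sigma'$ ($w\in Var$), then $\sigma(w')=\sigma'(w')$ for each $w'\in Var$ with $\sigma(w')\in\mathbb{D}^k(\sigma(w))$. Semantics: $M,\sigma\models K_zz'$ iff $\sigma'(z')=\sigma(z')$ for all $\sigma'\in\Sigma$ with $\sigma'\sim_z\sigma$. For $\sigma,\sigma'\in\mathbf{D}^{Var}$, $\mathsf{R}^z\sigma\sigma'$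 iff $(\sigma(z),\sigma'(z))\in\mathbf{R}$ and $\sigma(z')=\sigma'(z')$ for the other variable $z'$; $\mathsf{R}^z(\Gamma)=\{\sigma':\exists\sigma\in\Gamma,\mathsf{R}^z\sigma\sigma'\}$, $\mathsf{R}^z(\sigma)=\mathsf{R}^z(\{\sigma\})$; $\Sigma|\sigma=\{\sigma'\in\Sigma:\sigma\sim_w\sigma'\text{ for some }w\in Var\}$. $M,\sigma_1\models[z]\varphi$ iff for all $\sigma_2\in\mathsf{R}^z(\sigma_1)$, $(\mathbf{D},\mathbf{I},\Sigma',\sim'),\sigma_2\models\varphi$, where $\Sigma'=\{\sigma_2\}$ if $\sigma_2(x)\in\mathbb{D}^k(\sigma_2(y))$, and otherwise $\Sigma'=\{\sigma'\in\mathsf{R}^z(\Sigma|\sigma_1):\sigma'(x)\notin\mathbb{D}^k(\sigma'(y))\}$; and $\sigma'_1\sim'_w\sigma'_2$ iff $\sigma'_1(w)=\sigma'_2(w)$ for $w\in Var$. *)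

theory Defs
  imports Main
begin

datatype var = Vx | Vy

fun other :: "var \<Rightarrow> var" where
  "other Vx = Vy" | "other Vy = Vx"

type_synonym 'd asg = "var \<Rightarrow> 'd"

definition relOf :: "('p \<Rightarrow> 'd list set) \<Rightarrow> 'p \<Rightarrow> ('d \<times> 'd) set" where
  "relOf Ip Rs = {(a, b). [a, b] \<in> Ip Rs}"

fun Dk :: "('d \<times> 'd) set \<Rightarrow> nat \<Rightarrow> 'd \<Rightarrow> 'd set" where
  "Dk R 0 s = {s}"
| "Dk R (Suc m) s = Dk R m s \<union> {t. \<exists>u \<in> Dk R m s. (u, t) \<in> R \<or> (t, u) \<in> R}"

definition is_model ::
  "'p set \<Rightarrow> ('p \<Rightarrow> nat) \<Rightarrow> 'p \<Rightarrow> 'c set \<Rightarrow>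
   'd set \<Rightarrow> ('p \<Rightarrow> 'd list set) \<Rightarrow> ('c \<Rightarrow> 'd) \<Rightarrow>
   'd asg set \<Rightarrow> (var \<Rightarrow> ('d asg \<times> 'd asg) set) \<Rightarrow> bool" where
  "is_model Pred ar Rs Cst D Ip Ic Sit sim \<longleftrightarrow>
     Rs \<in> Pred \<and> ar Rs = 2 \<and> finite Cst \<and> Cst \<noteq> {} \<and>
     finite D \<and> D \<noteq> {} \<and>
     (\<forall>P \<in> Pred. \<forall>l \<in> Ip P. length l = ar P \<and> set l \<subseteq> D) \<and>
     (\<forall>a \<in> D. \<exists>b. (a, b) \<in> relOf Ip Rs) \<and>
     (\<forall>c \<in> Cst. Ic c \<in> D) \<and> D \<subseteq> Ic ` Cst \<and>
     Sit \<noteq> {} \<and> (\<forall>\<sigma> \<in> Sit. \<forall>w. \<sigma> w \<in> D) \<and>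
     (\<forall>w. equiv Sit (sim w))"

definition k_sight ::
  "nat \<Rightarrow> ('d \<times> 'd) set \<Rightarrow> 'd asg set \<Rightarrow> (var \<Rightarrow> ('d asg \<times> 'd asg) set) \<Rightarrow> bool" where
  "k_sight k R Sit sim \<longleftrightarrow>
     (\<forall>\<sigma> \<sigma>' w. (\<sigma>, \<sigma>') \<in> sim w \<longrightarrow>
        (\<forall>w'. \<sigma> w' \<in> Dk R k (\<sigma> w) \<longrightarrow> \<sigma> w' = \<sigma>' w'))"

definition sat_K ::
  "'d asg set \<Rightarrow> (var \<Rightarrow> ('d asg \<times> 'd asg) set) \<Rightarrow> 'd asg \<Rightarrow> var \<Rightarrow> var \<Rightarrow> bool" where
  "sat_K Sit sim \<sigma> z z' \<longleftrightarrow>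
     (\<forall>\<sigma>' \<in> Sit. (\<sigma>', \<sigma>) \<in> sim z \<longrightarrow> \<sigma>' z' = \<sigma> z')"

definition Rstep :: "('d \<times> 'd) set \<Rightarrow> var \<Rightarrow> 'd asg \<Rightarrow> 'd asg \<Rightarrow> bool" where
  "Rstep R z \<sigma> \<sigma>' \<longleftrightarrow> (\<sigma> z, \<sigma>' z) \<in> R \<and> \<sigma> (other z) = \<sigma>' (other z)"

definition Rimg :: "('d \<times> 'd) set \<Rightarrow> var \<Rightarrow> 'd asg set \<Rightarrow> 'd asg set" where
  "Rimg R z G = {\<sigma>'. \<exists>\<sigma> \<in> G. Rstep R z \<sigma> \<sigma>'}"

definition restrict_sit ::
  "'d asg set \<Rightarrow> (var \<Rightarrow> ('d asg \<times> 'd asg) set) \<Rightarrow> 'd asg \<Rightarrow> 'd asg set" where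
  "restrict_sit Sit sim \<sigma> = {\<sigma>' \<in> Sit. \<exists>w. (\<sigma>, \<sigma>') \<in> sim w}"

definition upd_Sigma ::
  "nat \<Rightarrow> ('d \<times> 'd) set \<Rightarrow> 'd asg set \<Rightarrow> (var \<Rightarrow> ('d asg \<times> 'd asg) set) \<Rightarrow>
   var \<Rightarrow> 'd asg \<Rightarrow> 'd asg \<Rightarrow> 'd asg set" where
  "upd_Sigma k R Sit sim z \<sigma>1 \<sigma>2 =
     (if \<sigma>2 Vx \<in> Dk R k (\<sigma>2 Vy) then {\<sigma>2}
      else {\<sigma>' \<in> Rimg R z (restrict_sit Sit sim \<sigma>1). \<sigma>' Vx \<notin> Dk R k (\<sigma>' Vy)})"

definition upd_sim :: "var \<Rightarrow> ('d asg \<times> 'd asg) set" where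
  "upd_sim w = {(a, b). a w = b w}"

definition sat_box_K ::
  "nat \<Rightarrow> ('d \<times> 'd) set \<Rightarrow> 'd asg set \<Rightarrow> (var \<Rightarrow> ('d asg \<times> 'd asg) set) \<Rightarrow>
   'd asg \<Rightarrow> var \<Rightarrow> var \<Rightarrow> bool" where
  "sat_box_K k R Sit sim \<sigma>1 z z' \<longleftrightarrow>
     (\<forall>\<sigma>2 \<in> Rimg R z {\<sigma>1}. sat_K (upd_Sigma k R Sit sim z \<sigma>1 \<sigma>2) upd_sim \<sigma>2 z z')"

end

theory Submission
  imports Defs
begin

lemma Dk_self: "s \<in> Dk R k s"
  by (induction k) auto

lemma other_cases: "z' \<noteq> z \<Longrightarrow> z' = other z"
  by (cases z; cases z') auto

theorem fact6:
  fixes Pred :: "'p set" and ar :: "'p \<Rightarrow> nat" and Rs :: 'p and Cst :: "'c set"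
    and D :: "'d set" and Ip :: "'p \<Rightarrow> 'd list set" and Ic :: "'c \<Rightarrow> 'd"
    and Sit :: "'d asg set" and sim :: "var \<Rightarrow> ('d asg \<times> 'd asg) set"
    and k :: nat and \<sigma> :: "'d asg" and z z' :: var
  assumes "is_model Pred ar Rs Cst D Ip Ic Sit sim"
    and "k_sight k (relOf Ip Rs) Sit sim"
    and "\<sigma> \<in> Sit"
    and "z' \<noteq> z"
    and "sat_K Sit sim \<sigma> z z'"
  shows "sat_box_K k (relOf Ip Rs) Sit sim \<sigma> z z'"
proof -
  have zo: "z' = other z" using assms(4) by (rule other_cases)
  have eq: "\<And>w. equiv Sit (sim w)" using assms(1) unfolding is_model_def by blast
  have key: "\<tau> z' = \<sigma> z'" if "\<tau> \<in> Sit" "(\<sigma>, \<tau>) \<in> sim w" for \<tau> w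
  proof (cases "w = z")
    case True
    have "(\<tau>, \<sigma>) \<in> sim z" using eq[of z] that True
      by (meson equiv_def symE)
    then show ?thesis using assms(5) that(1) unfolding sat_K_def by blast
  next
    case False
    then have "w = z'" using assms(4) by (cases w; cases z; cases z') auto
    then show ?thesis using assms(2) that(2) Dk_self unfolding k_sight_def by metis
  qed
  show ?thesis
    unfolding sat_box_K_def
  proof
    fix \<sigma>2 assume s2: "\<sigma>2 \<in> Rimg (relOf Ip Rs) z {\<sigma>}"
    then have s2z': "\<sigma>2 z' = \<sigma> z'" unfolding Rimg_def Rstep_def zo by auto
    show "sat_K (upd_Sigma k (relOf Ip Rs) Sit sim z \<sigma> \<sigma>2) upd_sim \<sigma>2 z z'"
      unfolding sat_K_def
    proof
      fix \<sigma>' assume m: "\<sigma>' \<in> upd_Sigma k (relOf Ip Rs) Sit sim z \<sigma> \<sigma>2"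
      show "(\<sigma>', \<sigma>2) \<in> upd_sim z \<longrightarrow> \<sigma>' z' = \<sigma>2 z'"
      proof (cases "\<sigma>2 Vx \<in> Dk (relOf Ip Rs) k (\<sigma>2 Vy)")
        case True
        then show ?thesis using m unfolding upd_Sigma_def by simp
      next
        case False
        then have "\<sigma>' \<in> Rimg (relOf Ip Rs) z (restrict_sit Sit sim \<sigma>)"
          using m unfolding upd_Sigma_def by simp
        then obtain \<tau> w where t: "\<tau> \<in> Sit" "(\<sigma>, \<tau>) \<in> sim w" "\<tau> z' = \<sigma>' z'"
          unfolding Rimg_def restrict_sit_def Rstep_def zo by auto
        then show ?thesis using key[OF t(1,2)] s2z' by simp
      qed
    qed
  qed
qed

end
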